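(* Let $s(n)=a(F_n)$ for $n\ge 0$. (a) For $n\ge 3$ the Fibonacci representation of $s(n)$ is $(1000)^{\lfloor (n-3)/4\rfloor}x_n$, where $x_n=10$ if $n\equiv 0\pmod 4$, $x_n=101$ if $n\equiv1\pmod4$, $x_n=1001$ if $n\equiv 2\pmod 4$, and $x_n=1$ if $n\equiv 3\pmod 4$; here $(1000)^k$ denotes $k$ concatenated copies of $1000$. (b) $s(n)=s(n-1)+s(n-3)+s(n-4)$ for $n\ge 4$, and for all $n\ge0$ $$s(n)=\frac{L_n}{10}+\frac{F_n}{2}+\begin{cases}-\tfrac15(-1)^{n/2}, & n \text{ even},\\[2pt] \tfrac25(-1)^{(n-1)/2}, & n\text{ odd}.\end{cases}$$
   Context: Let $(F_n)_{n\ge 0}$ be the Fibonacci numbers: $F_0=0$, $F_1=1$, $F_n=F_{n-1}+F_{n-2}$ for $n\ge 2$, and $(L_n)$ the Lucas numbers: $L_0=2$, $L_1=1$, $L_n=L_{n-1}+L_{n-2}$. Define $(a(n))_{n\ge 0}$ (OEIS A105774) by $a(0)=0$, $a(1)=1$, and for $n\ge 2$, $a(n)=F_{j+1}-a(n-F_j)$, where $j\ge 2$ is the unique index with $F_j<n\le F_{j+1}$. The Fibonacci (Zeckendorf) representation of $m\ge1$ is the unique binary string $e_1\cdots e_t$ with $e_1=1$, no two consecutive $1$'s, and $m=\sum_{i=1}^t e_iF_{t-i+2}$. *)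

theory Defs
  imports Complex_Main "HOL-Number_Theory.Fib"
begin

fun lucas :: "nat \<Rightarrow> nat" where
  "lucas 0 = 2"
| "lucas (Suc 0) = 1"
| "lucas (Suc (Suc n)) = lucas (Suc n) + lucas n"

definition fib_idx :: "nat \<Rightarrow> nat" where
  "fib_idx n = (THE j. 2 \<le> j \<and> fib j < n \<and> n \<le> fib (Suc j))"

text \<open>OEIS A105774. The guard in the recursive branch only ensures termination
  of the function package; for n >= 2 the index always exists and F_j >= 1.\<close>
function A105774 :: "nat \<Rightarrow> int" where
  "A105774 n =
     (if n = 0 then 0
      else if n = 1 then 1
      else if 0 < fib (fib_idx n) \<and> fib (fib_idx n) < n
      then int (fib (Suc (fib_idx n))) - A105774 (n - fib (fib_idx n))
      else undefined)"
  by auto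
termination
  by (relation "measure id") auto

definition fib_val :: "nat list \<Rightarrow> nat" where
  "fib_val es = (\<Sum>i<length es. es ! i * fib (length es - i + 1))"

definition is_fib_rep :: "nat \<Rightarrow> nat list \<Rightarrow> bool" where
  "is_fib_rep m es \<longleftrightarrow>
     es \<noteq> [] \<and> hd es = 1 \<and> set es \<subseteq> {0, 1} \<and>
     (\<forall>i. Suc i < length es \<longrightarrow> \<not> (es ! i = 1 \<and> es ! Suc i = 1)) \<and>
     fib_val es = m"

definition fib_rep :: "nat \<Rightarrow> nat list" where
  "fib_rep m = (THE es. is_fib_rep m es)"

definition s_seq :: "nat \<Rightarrow> int" where
  "s_seq n = A105774 (fib n)"

end

theory Submission
  imports Defs
begin

declare A105774.simps[simp del]

lemma fib_strict: "2 \<le> i \<Longrightarrow> i < j \<Longrightarrow> fib i < fib j"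
proof (induction j)
  case 0 then show ?case by simp
next
  case (Suc j)
  have j2: "2 \<le> j" using Suc.prems by simp
  have e: "fib (j - 1 + 2) = fib (j - 1 + 1) + fib (j - 1)" by (rule fib_plus_2)
  have e2: "j - 1 + 2 = Suc j" "j - 1 + 1 = j" using j2 by auto
  have p: "fib (j - 1) > 0" using j2 by (simp add: fib_neq_0_nat)
  have lt: "fib j < fib (Suc j)" using e p unfolding e2 by simp
  show ?case
  proof (cases "i = j")
    case True then show ?thesis using lt by simp
  next
    case False
    then have "i < j" using Suc.prems by simp
    then have "fib i < fib j" using Suc.IH Suc.prems(1) by simp
    then show ?thesis using lt by simp
  qed
qed

lemma fib_ge2: assumes "3 \<le> m" shows "fib m \<ge> 2"
proof -
  have "fib 3 = 2" by (simp add: numeral_eq_Suc)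
  then show ?thesis using fib_mono[of 3 m] assms by simp
qed

lemma fib_idx_fib: assumes "3 \<le> m" shows "fib_idx (fib m) = m - 1"
  unfolding fib_idx_def
proof (rule the_equality)
  show "2 \<le> m - 1 \<and> fib (m - 1) < fib m \<and> fib m \<le> fib (Suc (m - 1))"
    using assms fib_strict[of "m-1" m] by auto
next
  fix j assume j: "2 \<le> j \<and> fib j < fib m \<and> fib m \<le> fib (Suc j)"
  have "j < m" using j fib_mono[of m j] by (meson not_le leD)
  moreover have "m \<le> Suc j" using j fib_strict[of "Suc j" m] by (meson le_SucI not_le leD)
  ultimately show "j = m - 1" by simp
qed

lemma s_rec: assumes "1 \<le> m" shows "s_seq (m + 2) = int (fib (m + 2)) - s_seq m"
proof -
  have i: "fib_idx (fib (m+2)) = m + 1" using fib_idx_fib[of "m+2"] assms by simp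
  have f2: "fib (m+2) \<ge> 2" using fib_ge2[of "m+2"] assms by simp
  have lt: "fib (m+1) < fib (m+2)" using fib_strict[of "m+1" "m+2"] assms by simp
  have pos: "0 < fib (m+1)" by (simp add: fib_neq_0_nat)
  have d: "fib (m+2) - fib (m+1) = fib m" by (simp add: fib_plus_2)
  have n0: "fib (m+2) \<noteq> 0" "fib (m+2) \<noteq> 1" using f2 by auto
  have i': "fib (Suc (fib_idx (fib (m+2)))) = fib (m+2)" unfolding i by simp
  have "A105774 (fib (m+2)) = int (fib (Suc (fib_idx (fib (m+2))))) - A105774 (fib (m+2) - fib (fib_idx (fib (m+2))))"
    apply (subst A105774.simps)
    using n0 lt pos unfolding i by simp
  then show ?thesis unfolding s_seq_def i' unfolding i d .
qed

lemma s0: "s_seq 0 = 0" unfolding s_seq_def by (subst A105774.simps) simp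
lemma s1: "s_seq 1 = 1" unfolding s_seq_def by (subst A105774.simps) simp
lemma s2: "s_seq 2 = 1" unfolding s_seq_def by (subst A105774.simps) simp

lemma s_vals: "s_seq 3 = 1" "s_seq 4 = 2" "s_seq 5 = 4" "s_seq 6 = 6"
proof -
  show a: "s_seq 3 = 1" using s_rec[of 1] s1 by (simp add: numeral_eq_Suc)
  show b: "s_seq 4 = 2" using s_rec[of 2] s2 by (simp add: numeral_eq_Suc)
  show "s_seq 5 = 4" using s_rec[of 3] a by (simp add: numeral_eq_Suc)
  show "s_seq 6 = 6" using s_rec[of 4] b by (simp add: numeral_eq_Suc)
qed

lemma s_rec4: assumes "1 \<le> n" shows "s_seq (n + 4) = int (fib (n + 3)) + s_seq n"
proof -
  have h: "n+2+2 = n+4" by simp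
  have h2: "n+2+1 = n+3" by simp
  have a: "s_seq (n+4) = int (fib (n+4)) - s_seq (n+2)" using s_rec[of "n+2"] by (simp only: h)
  have b: "s_seq (n+2) = int (fib (n+2)) - s_seq n" using s_rec[of n] assms by simp
  have f4: "fib (n+4) = fib (n+3) + fib (n+2)" using fib_plus_2[of "n+2"] by (simp only: h h2)
  show ?thesis unfolding a b f4 by simp
qed

lemma lucas_sum: "lucas (n+2) + lucas n = 5 * fib (n+1)"
  by (induction n rule: fib.induct) (auto simp: numeral_eq_Suc)

definition C :: "nat \<Rightarrow> real" where
  "C n = real (lucas n) / 10 + real (fib n) / 2 +
              (if even n then - (1/5) * (-1) ^ (n div 2)
               else (2/5) * (-1) ^ ((n - 1) div 2))"

lemma C_step: assumes "1 \<le> m" shows "C (m+2) = real (fib (m+2)) - C m"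
proof -
  have L: "real (lucas (m+2)) + real (lucas m) = 5 * real (fib (m+1))"
    using lucas_sum[of m] by (metis of_nat_add of_nat_mult of_nat_numeral)
  have F: "real (fib (m+2)) = real (fib (m+1)) + real (fib m)"
    using fib_plus_2[of m] by simp
  have P: "(if even (m+2) then - (1/5) * (-1) ^ ((m+2) div 2)
               else (2/5) * (-1) ^ ((m+2 - 1) div 2)) =
           - (if even m then - (1/5) * (-1) ^ (m div 2)
               else (2/5) * (-1) ^ ((m - 1) div 2) :: real)"
  proof (cases "even m")
    case True
    then have "(m+2) div 2 = Suc (m div 2)" by auto
    then show ?thesis using True by simp
  next
    case False
    then have "(m+2-1) div 2 = Suc ((m-1) div 2)" using assms by (auto elim!: oddE)
    then show ?thesis using False by simp
  qed
  show ?thesis unfolding C_def P using L F by (simp add: field_simps)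
qed

lemma s_closed: "real_of_int (s_seq n) = C n"
proof (induction n rule: less_induct)
  case (less n)
  consider "n = 0" | "n = 1" | "n = 2" | "3 \<le> n" by linarith
  then show ?case
  proof cases
    case 1 then show ?thesis by (simp add: s0 C_def)
  next
    case 2
    have "s_seq n = 1" using s1 2 by simp
    then show ?thesis using 2 by (simp add: C_def)
  next
    case 3
    have "s_seq n = 1" using s2 3 by simp
    then show ?thesis using 3 by (simp add: C_def numeral_eq_Suc)
  next
    case 4
    define m where "m = n - 2"
    have nm: "n = m + 2" "1 \<le> m" using 4 unfolding m_def by auto
    show ?thesis unfolding nm(1) using less.IH[of m] s_rec[OF nm(2)] C_step[OF nm(2)] nm by simp
  qed
qed

lemma s_rec_b: assumes "4 \<le> n" shows "s_seq n = s_seq (n - 1) + s_seq (n - 3) + s_seq (n - 4)"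
proof (cases "n = 4")
  case True then show ?thesis using s_vals s0 s1 by simp
next
  case False
  define m where "m = n - 5"
  have m: "n = m + 5" using assms False unfolding m_def by auto
  have ha: "m+3+2 = m+5" and hb: "m+2+2 = m+4" and hc: "m+1+2=m+3" and hd: "m+3+1 = m+4" by simp_all
  have a: "s_seq (m+5) = int (fib (m+5)) - s_seq (m+3)" using s_rec[of "m+3"] by (simp only: ha)
  have b: "s_seq (m+4) = int (fib (m+4)) - s_seq (m+2)" using s_rec[of "m+2"] by (simp only: hb)
  have c: "s_seq (m+3) = int (fib (m+3)) - s_seq (m+1)" using s_rec[of "m+1"] by (simp only: hc)
  have f: "fib (m+5) = fib (m+4) + fib (m+3)" using fib_plus_2[of "m+3"] by (simp only: ha hd)
  have f': "int (fib (m+5)) = int (fib (m+4)) + int (fib (m+3))" using f by simp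
  have e: "n - 1 = m + 4" "n - 3 = m + 2" "n - 4 = m + 1" using m by auto
  show ?thesis unfolding e unfolding m using a b c f' by linarith
qed

fun noadj :: "nat list \<Rightarrow> bool" where
  "noadj (x # y # zs) = (\<not> (x = 1 \<and> y = 1) \<and> noadj (y # zs))"
| "noadj _ = True"

lemma noadj_iff: "(\<forall>i. Suc i < length es \<longrightarrow> \<not> (es ! i = 1 \<and> es ! Suc i = 1)) \<longleftrightarrow> noadj es"
proof (induction es rule: noadj.induct)
  case (1 x y zs)
  have "(\<forall>i. Suc i < length (x # y # zs) \<longrightarrow> \<not> ((x # y # zs) ! i = 1 \<and> (x # y # zs) ! Suc i = 1))
     \<longleftrightarrow> \<not> (x = 1 \<and> y = 1) \<and> (\<forall>i. Suc i < length (y # zs) \<longrightarrow> \<not> ((y # zs) ! i = 1 \<and> (y # zs) ! Suc i = 1))"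
    (is "?A \<longleftrightarrow> ?B")
  proof
    assume A: ?A
    have "\<not> (x = 1 \<and> y = 1)" using A[rule_format, of 0] by simp
    moreover have "\<forall>i. Suc i < length (y # zs) \<longrightarrow> \<not> ((y # zs) ! i = 1 \<and> (y # zs) ! Suc i = 1)"
    proof (intro allI impI)
      fix i assume "Suc i < length (y # zs)"
      then show "\<not> ((y # zs) ! i = 1 \<and> (y # zs) ! Suc i = 1)" using A[rule_format, of "Suc i"] by simp
    qed
    ultimately show ?B by blast
  next
    assume B: ?B
    show ?A
    proof (intro allI impI)
      fix i assume i: "Suc i < length (x # y # zs)"
      show "\<not> ((x # y # zs) ! i = 1 \<and> (x # y # zs) ! Suc i = 1)"
      proof (cases i)
        case 0 then show ?thesis using B by simp
      next
        case (Suc j) then show ?thesis using B i by auto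
      qed
    qed
  qed
  then show ?case using 1 by simp
next
  case "2_1" then show ?case by simp
next
  case ("2_2" v) then show ?case by simp
qed

lemma noadj_tl: "noadj (x # xs) \<Longrightarrow> noadj xs"
  by (cases xs) auto

lemma noadj_0: "noadj (0 # xs) = noadj xs"
  by (cases xs) auto

lemma fib_val_Nil: "fib_val [] = 0" unfolding fib_val_def by simp

lemma fib_val_Cons: "fib_val (x # xs) = x * fib (length xs + 2) + fib_val xs"
proof -
  have "fib_val (x#xs) = (\<Sum>i<Suc (length xs). (x#xs)!i * fib (Suc (length xs) - i + 1))"
    unfolding fib_val_def by simp
  also have "\<dots> = (x#xs)!0 * fib (Suc (length xs) - 0 + 1) + (\<Sum>i<length xs. (x#xs)!Suc i * fib (Suc (length xs) - Suc i + 1))"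
    by (rule sum.lessThan_Suc_shift)
  also have "\<dots> = x * fib (length xs + 2) + fib_val xs"
    unfolding fib_val_def by (simp del: fib.simps)
  finally show ?thesis .
qed

definition valid :: "nat list \<Rightarrow> bool" where
  "valid es \<longleftrightarrow> set es \<subseteq> {0, 1} \<and> noadj es"

lemma valid_tl: "valid (x # xs) \<Longrightarrow> valid xs"
  unfolding valid_def using noadj_tl by auto

lemma val_bound: "valid es \<Longrightarrow> fib_val es < fib (length es + 2)"
proof (induction es rule: induct_list012)
  case 1 then show ?case by (simp add: fib_val_Nil)
next
  case (2 x)
  then have "x \<le> 1" unfolding valid_def by auto
  then show ?case by (simp add: fib_val_Cons fib_val_Nil numeral_eq_Suc)
next
  case (3 x y zs)
  have x01: "x = 0 \<or> x = 1" using 3(3) unfolding valid_def by auto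
  have vyz: "valid (y # zs)" using valid_tl 3(3) by blast
  have vzs: "valid zs" using valid_tl vyz by blast
  show ?case
  proof (cases "x = 0")
    case True
    then show ?thesis using 3(2)[OF vyz] fib_mono[of "length zs + 3" "length zs + 4"]
      by (simp add: fib_val_Cons)
  next
    case False
    then have x1: "x = 1" using x01 by simp
    then have y0: "y = 0" using 3(3) unfolding valid_def by auto
    have "fib_val (x # y # zs) = fib (length zs + 3) + fib_val zs"
      using x1 y0 by (simp add: fib_val_Cons numeral_eq_Suc)
    also have "\<dots> < fib (length zs + 3) + fib (length zs + 2)" using 3(1)[OF vzs] by simp
    also have "\<dots> = fib (length (x # y # zs) + 2)"
      using fib_plus_2[of "length zs + 2"] by (simp add: numeral_eq_Suc)
    finally show ?thesis .
  qed
qed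

lemma same_len_unique:
  "valid es \<Longrightarrow> valid es' \<Longrightarrow> length es = length es' \<Longrightarrow> fib_val es = fib_val es' \<Longrightarrow> es = es'"
proof (induction es arbitrary: es')
  case Nil then show ?case by simp
next
  case (Cons x xs)
  obtain x' xs' where e': "es' = x' # xs'" using Cons.prems(3) by (cases es') auto
  have l: "length xs = length xs'" using Cons.prems(3) e' by simp
  have v1: "valid xs" "valid xs'" using Cons.prems(1,2) e' valid_tl by blast+
  have b1: "fib_val xs < fib (length xs + 2)" using val_bound[OF v1(1)] .
  have b2: "fib_val xs' < fib (length xs + 2)" using val_bound[OF v1(2)] l by simp
  have x01: "x = 0 \<or> x = 1" "x' = 0 \<or> x' = 1" using Cons.prems(1,2) e' unfolding valid_def by auto
  have eq: "x * fib (length xs + 2) + fib_val xs = x' * fib (length xs + 2) + fib_val xs'"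
    using Cons.prems(4) e' l by (simp add: fib_val_Cons)
  have "x = x'" using x01 eq b1 b2 by auto
  then have "fib_val xs = fib_val xs'" using eq by simp
  then have "xs = xs'" using Cons.IH[OF v1 l] by simp
  then show ?case using e' \<open>x = x'\<close> by simp
qed

lemma rep_lower: "is_fib_rep m es \<Longrightarrow> fib (length es + 1) \<le> m"
proof -
  assume r: "is_fib_rep m es"
  then obtain xs where e: "es = 1 # xs" unfolding is_fib_rep_def by (cases es) auto
  then show ?thesis using r unfolding is_fib_rep_def by (simp add: fib_val_Cons)
qed

lemma rep_valid: "is_fib_rep m es \<Longrightarrow> valid es"
  unfolding is_fib_rep_def valid_def using noadj_iff by blast

lemma rep_unique: assumes "is_fib_rep m es" "is_fib_rep m es'" shows "es = es'"
proof -
  have v: "valid es" "valid es'" using assms rep_valid by blast+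
  have m: "fib_val es = m" "fib_val es' = m" using assms unfolding is_fib_rep_def by auto
  have "length es = length es'"
  proof (rule ccontr)
    assume "length es \<noteq> length es'"
    then consider "length es < length es'" | "length es' < length es" by linarith
    then show False
    proof cases
      case 1
      have "m < fib (length es + 2)" using val_bound[OF v(1)] m by simp
      also have "\<dots> \<le> fib (length es' + 1)" using 1 by (intro fib_mono) simp
      also have "\<dots> \<le> m" using rep_lower[OF assms(2)] .
      finally show False by simp
    next
      case 2
      have "m < fib (length es' + 2)" using val_bound[OF v(2)] m by simp
      also have "\<dots> \<le> fib (length es + 1)" using 2 by (intro fib_mono) simp
      also have "\<dots> \<le> m" using rep_lower[OF assms(1)] .
      finally show False by simp
    qed
  qed
  then show ?thesis using same_len_unique v m by simp
qed

lemma fib_rep_eq: "is_fib_rep m es \<Longrightarrow> fib_rep m = es"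
  unfolding fib_rep_def using rep_unique by blast

definition X :: "nat \<Rightarrow> nat list" where
  "X d = (if d = 0 then [1] else if d = 1 then [1,0] else if d = 2 then [1,0,1] else [1,0,0,1])"

definition Lst :: "nat \<Rightarrow> nat \<Rightarrow> nat list" where
  "Lst k d = concat (replicate k [1,0,0,0]) @ X d"

lemma Lst_Suc: "Lst (Suc k) d = 1 # 0 # 0 # 0 # Lst k d"
  unfolding Lst_def by simp

lemma Lst_len: "d < 4 \<Longrightarrow> length (Lst k d) = 4 * k + d + 1"
  by (induction k) (auto simp: Lst_Suc, auto simp: Lst_def X_def)

lemma X_valid: "valid (X d)"
  unfolding X_def valid_def by auto

lemma Lst_valid: "valid (Lst k d)"
proof (induction k)
  case 0 then show ?case using X_valid by (simp add: Lst_def)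
next
  case (Suc k) then show ?case unfolding Lst_Suc valid_def by (simp add: noadj_0)
qed

lemma Lst_hd: "Lst k d \<noteq> [] \<and> hd (Lst k d) = 1"
  by (cases k) (auto simp: Lst_Suc, auto simp: Lst_def X_def split: if_splits)

lemma Lst_rep: "is_fib_rep (fib_val (Lst k d)) (Lst k d)"
  using Lst_valid[of k d] Lst_hd[of k d] noadj_iff unfolding is_fib_rep_def valid_def by blast

lemma Lst_val: "d < 4 \<Longrightarrow> s_seq (4 * k + 3 + d) = int (fib_val (Lst k d))"
proof (induction k)
  case 0
  have "d = 0 \<or> d = 1 \<or> d = 2 \<or> d = 3" using 0 by auto
  then show ?case using s_vals
    by (auto simp: Lst_def X_def fib_val_Cons fib_val_Nil numeral_eq_Suc)
next
  case (Suc k)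
  have l: "length (Lst k d) = 4 * k + d + 1" using Lst_len Suc.prems by simp
  have v0: "fib_val (Lst (Suc k) d) = fib (length (0 # 0 # 0 # Lst k d) + 2) + fib_val (Lst k d)"
    unfolding Lst_Suc by (simp del: fib.simps add: fib_val_Cons)
  have arg: "length (0 # 0 # 0 # Lst k d) + 2 = 4 * k + 3 + d + 3" using l by simp
  have v: "fib_val (Lst (Suc k) d) = fib (4 * k + 3 + d + 3) + fib_val (Lst k d)"
    using v0 unfolding arg .
  have e: "4 * Suc k + 3 + d = (4 * k + 3 + d) + 4" by simp
  show ?case unfolding e v using s_rec4[of "4 * k + 3 + d"] Suc by simp
qed

theorem theorem13:
  shows "(\<forall>n\<ge>3. s_seq n \<ge> 1 \<and>
            fib_rep (nat (s_seq n)) =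
              concat (replicate ((n - 3) div 4) [1, 0, 0, 0]) @
              (if n mod 4 = 0 then [1, 0]
               else if n mod 4 = 1 then [1, 0, 1]
               else if n mod 4 = 2 then [1, 0, 0, 1]
               else [1]))
       \<and> (\<forall>n\<ge>4. s_seq n = s_seq (n - 1) + s_seq (n - 3) + s_seq (n - 4))
       \<and> (\<forall>n. real_of_int (s_seq n) =
              real (lucas n) / 10 + real (fib n) / 2 +
              (if even n then - (1/5) * (-1) ^ (n div 2)
               else (2/5) * (-1) ^ ((n - 1) div 2)))"
proof (intro conjI allI impI)
  fix n :: nat assume n: "3 \<le> n"
  define k where "k = (n - 3) div 4"
  define d where "d = (n - 3) mod 4"
  have nd: "n = 4 * k + 3 + d" "d < 4" unfolding k_def d_def using n by auto
  have sv: "s_seq n = int (fib_val (Lst k d))" using Lst_val nd by simp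
  have "fib (length (Lst k d) + 1) \<le> fib_val (Lst k d)" using rep_lower[OF Lst_rep] .
  moreover have "fib (length (Lst k d) + 1) \<ge> 1" using fib_neq_0_nat[of "length (Lst k d) + 1"] by simp
  ultimately show "s_seq n \<ge> 1" using sv by simp
  have ifx: "(if n mod 4 = 0 then [1, 0]
               else if n mod 4 = 1 then [1, 0, 1]
               else if n mod 4 = 2 then [1, 0, 0, 1]
               else [1]) = X d"
  proof -
    have "d = 0 \<or> d = 1 \<or> d = 2 \<or> d = 3" using nd by auto
    moreover have "n mod 4 = (d + 3) mod 4" using nd by presburger
    ultimately show ?thesis unfolding X_def by auto
  qed
  have "fib_rep (nat (s_seq n)) = Lst k d" using sv fib_rep_eq[OF Lst_rep] by simp
  then show "fib_rep (nat (s_seq n)) = concat (replicate ((n - 3) div 4) [1, 0, 0, 0]) @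
              (if n mod 4 = 0 then [1, 0]
               else if n mod 4 = 1 then [1, 0, 1]
               else if n mod 4 = 2 then [1, 0, 0, 1]
               else [1])" unfolding ifx k_def[symmetric] Lst_def .
next
  fix n :: nat assume "4 \<le> n"
  then show "s_seq n = s_seq (n - 1) + s_seq (n - 3) + s_seq (n - 4)" by (rule s_rec_b)
next
  fix n :: nat
  show "real_of_int (s_seq n) =
              real (lucas n) / 10 + real (fib n) / 2 +
              (if even n then - (1/5) * (-1) ^ (n div 2)
               else (2/5) * (-1) ^ ((n - 1) div 2))" using s_closed[of n] unfolding C_def .
qed

end
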